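(* Let $\mathcal R$ be a pcDCTRS and $\mathcal R_f=\mathbf I(\mathcal R)$ its injectivization. Then $\mathcal R_f$ is a pcDCTRS and, for every basic ground term $s$, every term $t$ and trace term $\pi$: $\langle s,[\,]\rangle\stackrel{\mathsf c}{\rightharpoonup}_{\mathcal R}\langle t,\pi\rangle$ if and only if $s^{\mathtt i}\xrightarrow{\mathsf c}_{\mathcal R_f}\langle t,\widehat{\pi}\rangle$.
   Context: A DCTRS is a finite set of labelled conditional rules $\beta: l\to r\Leftarrow s_1\twoheadrightarrow t_1,\dots,s_n\twoheadrightarrow t_n$ ($l$ not a variable) with $\mathrm{Var}(r)\subseteq\mathrm{Var}(l,s_1,\dots,s_n,t_1,\dots,t_n)$ and $\mathrm{Var}(s_i)\subseteq\mathrm{Var}(l,t_1,\dots,t_{i-1})$; labels are unique, rule variables never renamed. Defined symbols are the roots of left-hand sides, constructors the rest; constructor terms use only constructors and variables; a basic term is $f(u_1,\dots,u_k)$ with $f$ defined and the $u_j$ constructor terms. A pcDCTRS is a DCTRS where in each rule $l$ and all $s_i$ are basic and $r$ and all $t_i$ are constructor terms. For a rule $\beta$ let $V_\beta=(\mathrm{Var}(l)\setminus\mathrm{Var}(r,s_1,\dots,s_n,t_1,\dots,t_n))\cup\bigcup_{i=1}^n(\mathrm{Var}(t_i)\setminus\mathrm{Var}(r,s_{i+1},\dots,s_n))$. Constructor reduction $\xrightarrow{\mathsf c}_{\mathcal S}$ on ground terms (least relation): $s\xrightarrow{\mathsf c}_{\mathcal S}t$ iff there are a position $p$ of $s$ with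 no reducible proper subterm of $s|_p$, a rule $l\to r\Leftarrow s_1\twoheadrightarrow t_1,\dots,s_n\twoheadrightarrow t_n\in\mathcal S$ and a ground constructor substitution $\sigma$ with $s|_p=l\sigma$, $s_i\sigma\xrightarrow{\mathsf c}{}^{*}_{\mathcal S}t_i\sigma$ for all $i$, $t=s[r\sigma]_p$. Positionless traces: $[\,]$ is a trace; if $\pi,\pi_1,\dots,\pi_n$ are traces, $\beta$ labels a rule with $n$ conditions and $\sigma$ is a ground substitution, then $\beta(\sigma,\pi_1,\dots,\pi_n):\pi$ is a trace; a trace term $\pi$ is identified with the singleton list $[\pi]$. Safe: every trace term $\beta(\sigma,\pi_1,\dots,\pi_n)$ occurring has $\sigma$ ground, $\mathrm{Dom}(\sigma)=V_\beta$, and $\pi_i$ safe. Reversible constructor (top) rewriting on safe pairs (least relation): $\langle s,\pi\rangle\stackrel{\mathsf c}{\rightharpoonup}_{\mathcal R}\langle t,\beta(\sigma',\pi_1,\dots,\pi_n):\pi\rangle$ iff there are a rule $\beta$ and a ground constructor substitution $\sigma$ with $s=l\sigma$, $\langle s_i\sigma,[\,]\rangle\stackrel{\mathsf c}{\rightharpoonup}{}^{*}_{\mathcal R}\langle t_i\sigma,\pi_i\rangle$ for all $i$, $t=r\sigma$, $\sigma'=\sigma|_{V_\beta}$. Injectivization $\mathbf I(\mathcal R)$: introduce a fresh binary constructor $\langle\cdot,\cdot\rangle$, for each rule label $\beta$ a fresh constructor $\beta$ of appropriate arity, and for each defined $f$ a fresh defined symbol $f^{\mathtt i}$; for a basic term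 $u=f(\vec u)$ let $u^{\mathtt i}=f^{\mathtt i}(\vec u)$. Each rule $\beta: l\to r\Leftarrow s_1\twoheadrightarrow t_1,\dots,s_n\twoheadrightarrow t_n$ is replaced by $l^{\mathtt i}\to\langle r,\beta(y_1,\dots,y_m,w_1,\dots,w_n)\rangle\Leftarrow s_1^{\mathtt i}\twoheadrightarrow\langle t_1,w_1\rangle,\dots,s_n^{\mathtt i}\twoheadrightarrow\langle t_n,w_n\rangle$, where $y_1,\dots,y_m$ are the variables of $V_\beta$ in lexicographic order and $w_1,\dots,w_n$ are fresh variables. For a trace term $\pi=\beta(\{y_1\mapsto u_1,\dots,y_m\mapsto u_m\},\pi_1,\dots,\pi_n)$ with $y_1,\dots,y_m$ in lexicographic order, $\widehat\pi=\beta(u_1,\dots,u_m,\widehat{\pi_1},\dots,\widehat{\pi_n})$ (recursively). *)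

theory Defs
  imports Main
begin

datatype ('f, 'v) "term" = Var 'v | Fun 'f "('f, 'v) term list"

fun vars :: "('f, 'v) term \<Rightarrow> 'v set" where
  "vars (Var x) = {x}"
| "vars (Fun f ts) = \<Union> (vars ` set ts)"

fun funs :: "('f, 'v) term \<Rightarrow> 'f set" where
  "funs (Var x) = {}"
| "funs (Fun f ts) = insert f (\<Union> (funs ` set ts))"

definition ground :: "('f, 'v) term \<Rightarrow> bool" where
  "ground t \<longleftrightarrow> vars t = {}"

fun subst :: "('v \<Rightarrow> ('f, 'w) term) \<Rightarrow> ('f, 'v) term \<Rightarrow> ('f, 'w) term" where
  "subst \<sigma> (Var x) = \<sigma> x"
| "subst \<sigma> (Fun f ts) = Fun f (map (subst \<sigma>) ts)"

fun subterms :: "('f, 'v) term \<Rightarrow> ('f, 'v) term set" where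
  "subterms (Var x) = {Var x}"
| "subterms (Fun f ts) = insert (Fun f ts) (\<Union> (subterms ` set ts))"

fun psubterms :: "('f, 'v) term \<Rightarrow> ('f, 'v) term set" where
  "psubterms (Var x) = {}"
| "psubterms (Fun f ts) = \<Union> (subterms ` set ts)"

text \<open>A rule  l \<rightarrow> r \<Leftarrow> s1 \<twoheadrightarrow> t1, ..., sn \<twoheadrightarrow> tn  is (l, r, [(s1,t1),...,(sn,tn)]);
  a labelled rule system is a set of pairs (label, rule).\<close>

type_synonym ('f, 'v) crule = "('f, 'v) term \<times> ('f, 'v) term \<times> (('f, 'v) term \<times> ('f, 'v) term) list"
type_synonym ('l, 'f, 'v) lctrs = "('l \<times> ('f, 'v) crule) set"

definition lhs :: "('f, 'v) crule \<Rightarrow> ('f, 'v) term" where "lhs \<rho> = fst \<rho>"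
definition rhs :: "('f, 'v) crule \<Rightarrow> ('f, 'v) term" where "rhs \<rho> = fst (snd \<rho>)"
definition conds :: "('f, 'v) crule \<Rightarrow> (('f, 'v) term \<times> ('f, 'v) term) list" where
  "conds \<rho> = snd (snd \<rho>)"

definition cvars :: "(('f, 'v) term \<times> ('f, 'v) term) list \<Rightarrow> 'v set" where
  "cvars cs = (\<Union>(s, t) \<in> set cs. vars s \<union> vars t)"

definition rule_vars :: "('f, 'v) crule \<Rightarrow> 'v set" where
  "rule_vars \<rho> = vars (lhs \<rho>) \<union> vars (rhs \<rho>) \<union> cvars (conds \<rho>)"

definition is_dctrs :: "('l, 'f, 'v) lctrs \<Rightarrow> bool" where
  "is_dctrs R \<longleftrightarrow> finite R
    \<and> (\<forall>(\<beta>, \<rho>) \<in> R. \<forall>(\<beta>', \<rho>') \<in> R. \<beta> = \<beta>' \<longrightarrow> \<rho> = \<rho>')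
    \<and> (\<forall>(\<beta>, \<rho>) \<in> R.
         (\<exists>f ts. lhs \<rho> = Fun f ts)
       \<and> vars (rhs \<rho>) \<subseteq> vars (lhs \<rho>) \<union> cvars (conds \<rho>)
       \<and> (\<forall>i < length (conds \<rho>).
            vars (fst (conds \<rho> ! i)) \<subseteq> vars (lhs \<rho>) \<union> (\<Union>j<i. vars (snd (conds \<rho> ! j)))))"

definition defs :: "('l, 'f, 'v) lctrs \<Rightarrow> 'f set" where
  "defs R = {f. \<exists>(\<beta>, \<rho>) \<in> R. \<exists>ts. lhs \<rho> = Fun f ts}"

definition constr_term :: "('l, 'f, 'v) lctrs \<Rightarrow> ('f, 'w) term \<Rightarrow> bool" where
  "constr_term R t \<longleftrightarrow> funs t \<inter> defs R = {}"

definition basic :: "('l, 'f, 'v) lctrs \<Rightarrow> ('f, 'w) term \<Rightarrow> bool" where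
  "basic R t \<longleftrightarrow> (\<exists>f us. t = Fun f us \<and> f \<in> defs R \<and> (\<forall>u \<in> set us. constr_term R u))"

definition is_pcdctrs :: "('l, 'f, 'v) lctrs \<Rightarrow> bool" where
  "is_pcdctrs R \<longleftrightarrow> is_dctrs R \<and> (\<forall>(\<beta>, \<rho>) \<in> R.
      basic R (lhs \<rho>) \<and> constr_term R (rhs \<rho>)
      \<and> (\<forall>(s, t) \<in> set (conds \<rho>). basic R s \<and> constr_term R t))"

definition gc_subst :: "('l, 'f, 'v) lctrs \<Rightarrow> 'v set \<Rightarrow> ('v \<Rightarrow> ('f, 'v) term) \<Rightarrow> bool" where
  "gc_subst R X \<sigma> \<longleftrightarrow> (\<forall>x \<in> X. ground (\<sigma> x) \<and> constr_term R (\<sigma> x))"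

definition Vb :: "('f, 'v) crule \<Rightarrow> 'v set" where
  "Vb \<rho> = (vars (lhs \<rho>) - (vars (rhs \<rho>) \<union> cvars (conds \<rho>)))
     \<union> (\<Union>i < length (conds \<rho>).
          vars (snd (conds \<rho> ! i)) - (vars (rhs \<rho>) \<union> cvars (drop (Suc i) (conds \<rho>))))"

text \<open>The side condition "no reducible proper subterm of the redex"
  is rendered as "no proper subterm of the redex is lhs-matchable"; for the pcDCTRSs to which
  the relation is applied here this condition is vacuous.\<close>
definition lhs_match :: "('l, 'f, 'v) lctrs \<Rightarrow> ('f, 'v) term \<Rightarrow> bool" where
  "lhs_match R u \<longleftrightarrow> (\<exists>(\<beta>, \<rho>) \<in> R. \<exists>\<sigma>. gc_subst R (rule_vars \<rho>) \<sigma> \<and> u = subst \<sigma> (lhs \<rho>))"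

inductive cstep :: "('l, 'f, 'v) lctrs \<Rightarrow> ('f, 'v) term \<Rightarrow> ('f, 'v) term \<Rightarrow> bool"
  for R :: "('l, 'f, 'v) lctrs" where
  top: "(\<beta>, \<rho>) \<in> R \<Longrightarrow> gc_subst R (rule_vars \<rho>) \<sigma>
    \<Longrightarrow> (\<forall>u \<in> psubterms (subst \<sigma> (lhs \<rho>)). \<not> lhs_match R u)
    \<Longrightarrow> (\<forall>i < length (conds \<rho>).
          (cstep R)\<^sup>*\<^sup>* (subst \<sigma> (fst (conds \<rho> ! i))) (subst \<sigma> (snd (conds \<rho> ! i))))
    \<Longrightarrow> cstep R (subst \<sigma> (lhs \<rho>)) (subst \<sigma> (rhs \<rho>))"
| ctxt: "cstep R u u' \<Longrightarrow> (\<forall>v \<in> set ss \<union> set ts. ground v)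
    \<Longrightarrow> cstep R (Fun f (ss @ u # ts)) (Fun f (ss @ u' # ts))"

datatype ('l, 'f, 'v) trace_term =
  TT 'l "'v \<rightharpoonup> ('f, 'v) term" "('l, 'f, 'v) trace_term list list"

type_synonym ('l, 'f, 'v) trace = "('l, 'f, 'v) trace_term list"

fun safe_tt :: "('l, 'f, 'v) lctrs \<Rightarrow> ('l, 'f, 'v) trace_term \<Rightarrow> bool" where
  "safe_tt R (TT \<beta> \<sigma> \<pi>s) \<longleftrightarrow>
     (\<exists>\<rho>. (\<beta>, \<rho>) \<in> R \<and> length \<pi>s = length (conds \<rho>) \<and> dom \<sigma> = Vb \<rho>)
     \<and> (\<forall>y \<in> dom \<sigma>. ground (the (\<sigma> y)))
     \<and> (\<forall>\<pi> \<in> set \<pi>s. \<forall>p \<in> set \<pi>. safe_tt R p)"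

definition safe_trace :: "('l, 'f, 'v) lctrs \<Rightarrow> ('l, 'f, 'v) trace \<Rightarrow> bool" where
  "safe_trace R \<pi> \<longleftrightarrow> (\<forall>p \<in> set \<pi>. safe_tt R p)"

definition restr :: "('v \<Rightarrow> ('f, 'v) term) \<Rightarrow> 'v set \<Rightarrow> 'v \<rightharpoonup> ('f, 'v) term" where
  "restr \<sigma> X = (\<lambda>x. if x \<in> X then Some (\<sigma> x) else None)"

inductive rstep :: "('l, 'f, 'v) lctrs \<Rightarrow> ('f, 'v) term \<times> ('l, 'f, 'v) trace
    \<Rightarrow> ('f, 'v) term \<times> ('l, 'f, 'v) trace \<Rightarrow> bool"
  for R :: "('l, 'f, 'v) lctrs" where
  "(\<beta>, \<rho>) \<in> R \<Longrightarrow> gc_subst R (rule_vars \<rho>) \<sigma> \<Longrightarrow> safe_trace R \<pi>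
    \<Longrightarrow> length \<pi>s = length (conds \<rho>)
    \<Longrightarrow> (\<forall>i < length (conds \<rho>).
          (rstep R)\<^sup>*\<^sup>* (subst \<sigma> (fst (conds \<rho> ! i)), []) (subst \<sigma> (snd (conds \<rho> ! i)), \<pi>s ! i))
    \<Longrightarrow> rstep R (subst \<sigma> (lhs \<rho>), \<pi>)
               (subst \<sigma> (rhs \<rho>), TT \<beta> (restr \<sigma> (Vb \<rho>)) \<pi>s # \<pi>)"

text \<open>Symbols of the injectivized system: original symbols, the fresh pair constructor,
  a fresh constructor per rule label, and a fresh defined symbol f^i per symbol f.
  Variables: original variables (Inl) and fresh variables w_i (Inr i).\<close>
datatype ('f, 'l) isym = Orig 'f | PairS | LabS 'l | InjS 'f

type_synonym ('f, 'l, 'v) iterm = "(('f, 'l) isym, 'v + nat) term"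

definition emb :: "('f, 'v) term \<Rightarrow> ('f, 'l, 'v) iterm" where
  "emb = map_term Orig Inl"

fun inj_term :: "('f, 'v) term \<Rightarrow> ('f, 'l, 'v) iterm" where
  "inj_term (Fun f us) = Fun (InjS f) (map emb us)"
| "inj_term (Var x) = Var (Inl x)"

definition pair :: "('f, 'l, 'v) iterm \<Rightarrow> ('f, 'l, 'v) iterm \<Rightarrow> ('f, 'l, 'v) iterm" where
  "pair a b = Fun PairS [a, b]"

definition inj_rule :: "'l \<times> ('f, 'v::linorder) crule \<Rightarrow> 'l \<times> (('f, 'l) isym, 'v + nat) crule" where
  "inj_rule = (\<lambda>(\<beta>, \<rho>).
     (\<beta>, (inj_term (lhs \<rho>),
          pair (emb (rhs \<rho>))
               (Fun (LabS \<beta>) (map (\<lambda>y. Var (Inl y)) (sorted_list_of_set (Vb \<rho>))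
                               @ map (\<lambda>i. Var (Inr i)) [0..<length (conds \<rho>)])),
          map (\<lambda>i. (inj_term (fst (conds \<rho> ! i)), pair (emb (snd (conds \<rho> ! i))) (Var (Inr i))))
              [0..<length (conds \<rho>)])))"

definition injz :: "('l, 'f, 'v::linorder) lctrs \<Rightarrow> ('l, ('f, 'l) isym, 'v + nat) lctrs" where
  "injz R = inj_rule ` R"

text \<open>The translation of trace terms; it is defined (Some) exactly when every sub-trace
  is a single trace term (trace terms being identified with singleton traces).\<close>
function hat :: "('l, 'f, 'v::linorder) trace_term \<Rightarrow> ('f, 'l, 'v) iterm option" where
  "hat (TT \<beta> \<sigma> \<pi>s) =
     (let hs = map (\<lambda>\<pi>. case \<pi> of [p] \<Rightarrow> hat p | _ \<Rightarrow> None) \<pi>s in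
      if None \<in> set hs then None
      else Some (Fun (LabS \<beta>) (map (\<lambda>y. emb (the (\<sigma> y))) (sorted_list_of_set (dom \<sigma>))
                                @ map the hs)))"
  by pat_completeness auto
termination
  apply (relation "measure size")
   apply simp_all
  apply (drule size_list_estimation'[where f = "size_list size", OF _ order_refl])
  apply simp
  done

end

theory Submission
  imports Defs
begin


lemma emb_simps[simp]: "emb (Var x) = Var (Inl x)" "emb (Fun f ts) = Fun (Orig f) (map emb ts)"
  by (simp_all add: emb_def)

lemma emb_inj: "emb a = emb b \<Longrightarrow> a = b"
  unfolding emb_def using term.inj_map[of Orig Inl] by (auto simp: inj_def)

lemma finite_vars[simp]: "finite (vars t)"
  by (induction t) auto

lemma vars_emb[simp]: "vars (emb t) = Inl ` vars t"
  by (induction t) auto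

lemma funs_emb: "funs (emb t) = Orig ` funs t"
  by (induction t) auto

lemma ground_emb[simp]: "ground (emb t) = ground t"
  by (simp add: ground_def)

lemma subterm_funs: "u \<in> subterms t \<Longrightarrow> funs u \<subseteq> funs t"
  by (induction t) auto

lemma psubterm_funs: "u \<in> psubterms t \<Longrightarrow> funs u \<subseteq> funs t"
  by (cases t) (auto dest: subterm_funs)

lemma subst_emb: "(\<forall>x\<in>vars t. \<sigma>' (Inl x) = emb (\<sigma> x)) \<Longrightarrow> subst \<sigma>' (emb t) = emb (subst \<sigma> t)"
  by (induction t) auto

lemma vars_subst: "vars (subst \<sigma> t) = (\<Union>x\<in>vars t. vars (\<sigma> x))"
  by (induction t) auto

lemma funs_subst: "funs (subst \<sigma> t) = funs t \<union> (\<Union>x\<in>vars t. funs (\<sigma> x))"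
  by (induction t) auto

lemma emb_match:
  "subst \<sigma>' (emb l) = emb u \<Longrightarrow> x \<in> vars l \<Longrightarrow>
   \<exists>v. \<sigma>' (Inl x) = emb v \<and> funs v \<subseteq> funs u \<and> vars v \<subseteq> vars u"
proof (induction l arbitrary: u)
  case (Var y) then show ?case by auto
next
  case (Fun f ls)
  then obtain us where u: "u = Fun f us" and m: "map (subst \<sigma>' \<circ> emb) ls = map emb us"
    by (cases u) auto
  from Fun.prems obtain l where l: "l \<in> set ls" "x \<in> vars l" by auto
  then obtain j where j: "j < length ls" "ls ! j = l" by (auto simp: in_set_conv_nth)
  have len: "length ls = length us" using m by (metis length_map)
  from m j have "subst \<sigma>' (emb l) = emb (us ! j)"
    by (metis comp_apply len nth_map)
  from Fun.IH[OF l(1) this l(2)] obtain v where "\<sigma>' (Inl x) = emb v" "funs v \<subseteq> funs (us ! j)"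
     "vars v \<subseteq> vars (us ! j)" by blast
  moreover have "us ! j \<in> set us" using j len by auto
  ultimately show ?case using u by auto
qed

lemma constr_subst:
  "gc_subst R X \<sigma> \<Longrightarrow> vars t \<subseteq> X \<Longrightarrow> constr_term R t \<Longrightarrow>
   ground (subst \<sigma> t) \<and> constr_term R (subst \<sigma> t)"
  unfolding gc_subst_def constr_term_def ground_def
  by (auto simp: vars_subst funs_subst)

fun unemb :: "('f, 'l, 'v) iterm \<Rightarrow> ('f, 'v) term" where
  "unemb (Var (Inl x)) = Var x"
| "unemb (Var (Inr i)) = Var undefined"
| "unemb (Fun (Orig f) ts) = Fun f (map unemb ts)"
| "unemb (Fun _ ts) = Fun undefined (map unemb ts)"

lemma unemb_emb[simp]: "unemb (emb t) = t"
  by (induction t) (auto simp: map_idI)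


definition irule :: "'l \<Rightarrow> ('f, 'v::linorder) crule \<Rightarrow> (('f, 'l) isym, 'v + nat) crule" where
  "irule \<beta> \<rho> = snd (inj_rule (\<beta>, \<rho>))"

lemma inj_rule_eq: "inj_rule (\<beta>, \<rho>) = (\<beta>, irule \<beta> \<rho>)"
  by (simp add: irule_def inj_rule_def)

lemma irule_lhs[simp]: "lhs (irule \<beta> \<rho>) = inj_term (lhs \<rho>)"
  and irule_rhs[simp]: "rhs (irule \<beta> \<rho>) = pair (emb (rhs \<rho>))
               (Fun (LabS \<beta>) (map (\<lambda>y. Var (Inl y)) (sorted_list_of_set (Vb \<rho>))
                               @ map (\<lambda>i. Var (Inr i)) [0..<length (conds \<rho>)]))"
  and irule_conds[simp]: "conds (irule \<beta> \<rho>) = map (\<lambda>i. (inj_term (fst (conds \<rho> ! i)), pair (emb (snd (conds \<rho> ! i))) (Var (Inr i))))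
              [0..<length (conds \<rho>)]"
  by (simp_all add: irule_def inj_rule_def lhs_def rhs_def conds_def)

lemma mem_injz: "(\<beta>, \<rho>') \<in> injz R \<longleftrightarrow> (\<exists>\<rho>. (\<beta>, \<rho>) \<in> R \<and> \<rho>' = irule \<beta> \<rho>)"
  unfolding injz_def by (force simp: inj_rule_eq)



lemma set_nth_img: "set cs = (\<lambda>i. cs ! i) ` {..<length cs}"
  by (auto simp: in_set_conv_nth image_def)

lemma cvars_nth: "cvars cs = (\<Union>i<length cs. vars (fst (cs!i)) \<union> vars (snd (cs!i)))"
  unfolding cvars_def by (subst set_nth_img) (simp add: split_beta)

lemma vars_inj_term[simp]: "vars (inj_term l) = Inl ` vars l"
  by (cases l) auto

lemma subst_inj_term:
  "(\<forall>x\<in>vars l. \<sigma>' (Inl x) = emb (\<sigma> x)) \<Longrightarrow> (\<exists>f ts. l = Fun f ts) \<Longrightarrow>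
   subst \<sigma>' (inj_term l) = inj_term (subst \<sigma> l)"
  by (auto simp: subst_emb)


definition WV :: "('f, 'v) crule \<Rightarrow> 'v set" where
  "WV \<rho> = vars (lhs \<rho>) \<union> (\<Union>i<length (conds \<rho>). vars (snd (conds \<rho> ! i)))"

lemma dctrsD:
  assumes "is_dctrs R" "(\<beta>, \<rho>) \<in> R"
  shows "\<exists>f ts. lhs \<rho> = Fun f ts" "vars (rhs \<rho>) \<subseteq> vars (lhs \<rho>) \<union> cvars (conds \<rho>)"
    "\<And>i. i < length (conds \<rho>) \<Longrightarrow>
            vars (fst (conds \<rho> ! i)) \<subseteq> vars (lhs \<rho>) \<union> (\<Union>j<i. vars (snd (conds \<rho> ! j)))"
  using assms unfolding is_dctrs_def by fastforce+

lemma dctrs_unique: "is_dctrs R \<Longrightarrow> (\<beta>, \<rho>) \<in> R \<Longrightarrow> (\<beta>, \<rho>') \<in> R \<Longrightarrow> \<rho> = \<rho>'"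
  unfolding is_dctrs_def by fast

lemma cvars_WV: assumes "is_dctrs R" "(\<beta>, \<rho>) \<in> R" shows "cvars (conds \<rho>) \<subseteq> WV \<rho>"
proof
  fix x assume "x \<in> cvars (conds \<rho>)"
  then obtain i where i: "i < length (conds \<rho>)"
    "x \<in> vars (fst (conds \<rho> ! i)) \<union> vars (snd (conds \<rho> ! i))" by (auto simp: cvars_nth)
  show "x \<in> WV \<rho>" using i dctrsD(3)[OF assms i(1)] unfolding WV_def by auto
qed

lemma rule_vars_WV: assumes "is_dctrs R" "(\<beta>, \<rho>) \<in> R" shows "rule_vars \<rho> \<subseteq> WV \<rho>"
  using cvars_WV[OF assms] dctrsD(2)[OF assms] unfolding rule_vars_def WV_def by auto

lemma WV_rule_vars: "WV \<rho> \<subseteq> rule_vars \<rho>"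
  unfolding rule_vars_def WV_def cvars_nth by auto

lemma Vb_sub: "Vb \<rho> \<subseteq> WV \<rho>"
  unfolding Vb_def WV_def by auto

lemma finite_Vb[simp]: "finite (Vb \<rho>)"
  using Vb_sub[of \<rho>] unfolding WV_def by (meson finite_UN_I finite_Un finite_lessThan finite_subset finite_vars)



lemma c1: "cvars (conds (irule \<beta> \<rho>)) = (\<Union>i<length (conds \<rho>). Inl ` vars (fst (conds \<rho> ! i))
     \<union> (Inl ` vars (snd (conds \<rho> ! i)) \<union> {Inr i}))"
  unfolding cvars_def irule_conds set_map atLeast0LessThan[symmetric] atLeastLessThan_upt[symmetric]
  by (auto simp: pair_def)
lemma r1: "vars (rhs (irule \<beta> \<rho>)) = Inl ` vars (rhs \<rho>) \<union> (Inl ` Vb \<rho> \<union> Inr ` {..<length (conds \<rho>)})"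
    unfolding irule_rhs pair_def by (simp add: atLeast0LessThan) blast
lemma rule_vars_irule:
  "rule_vars (irule \<beta> \<rho>) \<subseteq> Inl ` rule_vars \<rho> \<union> Inr ` {..<length (conds \<rho>)}"
proof -
  have Vb: "Vb \<rho> \<subseteq> rule_vars \<rho>" by (rule subset_trans[OF Vb_sub WV_rule_vars])
  have C: "vars (fst (conds \<rho> ! i)) \<subseteq> rule_vars \<rho>" "vars (snd (conds \<rho> ! i)) \<subseteq> rule_vars \<rho>"
    if "i < length (conds \<rho>)" for i
    using that unfolding rule_vars_def cvars_nth by blast+
  have L: "vars (lhs \<rho>) \<subseteq> rule_vars \<rho>" "vars (rhs \<rho>) \<subseteq> rule_vars \<rho>"
    by (auto simp: rule_vars_def)
  show ?thesis
    unfolding rule_vars_def[of "irule \<beta> \<rho>"] c1 r1 irule_lhs vars_inj_term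
  proof (intro Un_least UN_least)
    show "Inl ` vars (lhs \<rho>) \<subseteq> Inl ` rule_vars \<rho> \<union> Inr ` {..<length (conds \<rho>)}"
      using image_mono[OF L(1), of Inl] by blast
    show "Inl ` vars (rhs \<rho>) \<subseteq> Inl ` rule_vars \<rho> \<union> Inr ` {..<length (conds \<rho>)}"
      using image_mono[OF L(2), of Inl] by blast
    show "Inl ` Vb \<rho> \<subseteq> Inl ` rule_vars \<rho> \<union> Inr ` {..<length (conds \<rho>)}"
      using image_mono[OF Vb, of Inl] by blast
    show "Inr ` {..<length (conds \<rho>)} \<subseteq> Inl ` rule_vars \<rho> \<union> Inr ` {..<length (conds \<rho>)}"
      by blast
  next
    fix i assume "i \<in> {..<length (conds \<rho>)}"
    then have i: "i < length (conds \<rho>)" by simp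
    show "Inl ` vars (fst (conds \<rho> ! i)) \<subseteq> Inl ` rule_vars \<rho> \<union> Inr ` {..<length (conds \<rho>)}"
      using image_mono[OF C(1)[OF i], of Inl] by blast
    show "Inl ` vars (snd (conds \<rho> ! i)) \<subseteq> Inl ` rule_vars \<rho> \<union> Inr ` {..<length (conds \<rho>)}"
      using image_mono[OF C(2)[OF i], of Inl] by blast
    show "{Inr i} \<subseteq> Inl ` rule_vars \<rho> \<union> Inr ` {..<length (conds \<rho>)}"
      using i by blast
  qed
qed

lemma defs_iff: "f \<in> defs R \<longleftrightarrow> (\<exists>\<beta> \<rho> ts. (\<beta>, \<rho>) \<in> R \<and> lhs \<rho> = Fun f ts)"
  unfolding defs_def by blast

lemma defs_injz: fixes R :: "('l, 'f, 'v::linorder) lctrs" assumes "is_dctrs R" shows "defs (injz R) = InjS ` defs R"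
proof (intro set_eqI iffI)
  fix g :: "('f, 'l) isym" assume "g \<in> defs (injz R)"
  then obtain \<beta> \<rho>' ts where "(\<beta>, \<rho>') \<in> injz R" "lhs \<rho>' = Fun g ts" unfolding defs_iff by blast
  then obtain \<rho> where r: "(\<beta>, \<rho>) \<in> R" "inj_term (lhs \<rho>) = Fun g ts" unfolding mem_injz by auto
  obtain f us where l: "lhs \<rho> = Fun f us" using dctrsD(1)[OF assms r(1)] by blast
  have "f \<in> defs R" unfolding defs_iff using r(1) l by blast
  moreover have "g = InjS f" using r(2) l by simp
  ultimately show "g \<in> InjS ` defs R" by blast
next
  fix g :: "('f, 'l) isym" assume "g \<in> InjS ` defs R"
  then obtain f where "g = InjS f" "f \<in> defs R" by blast
  then obtain \<beta> \<rho> ts where g: "g = InjS f" "(\<beta>, \<rho>) \<in> R" "lhs \<rho> = Fun f ts" unfolding defs_iff by blast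
  have "(\<beta>, irule \<beta> \<rho>) \<in> injz R" unfolding mem_injz using g(2) by blast
  moreover have "lhs (irule \<beta> \<rho>) = Fun g (map emb ts)" using g by simp
  ultimately show "g \<in> defs (injz R)" unfolding defs_iff by blast
qed

lemma constr_emb: "is_dctrs R \<Longrightarrow> constr_term (injz R) (emb t)"
  by (auto simp: constr_term_def defs_injz funs_emb)


lemma pcD:
  assumes "is_pcdctrs R" "(\<beta>, \<rho>) \<in> R"
  shows "is_dctrs R" "basic R (lhs \<rho>)" "constr_term R (rhs \<rho>)"
    "\<And>i. i < length (conds \<rho>) \<Longrightarrow> basic R (fst (conds \<rho> ! i)) \<and> constr_term R (snd (conds \<rho> ! i))"
proof -
  have H: "basic R (lhs \<rho>) \<and> constr_term R (rhs \<rho>) \<and> (\<forall>(s, t) \<in> set (conds \<rho>). basic R s \<and> constr_term R t)"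
  proof -
    have "\<forall>x\<in>R. case x of (\<beta>, \<rho>) \<Rightarrow> basic R (lhs \<rho>) \<and> constr_term R (rhs \<rho>)
      \<and> (\<forall>(s, t) \<in> set (conds \<rho>). basic R s \<and> constr_term R t)"
      using assms(1) unfolding is_pcdctrs_def by (rule conjunct2)
    from bspec[OF this assms(2)] show ?thesis by simp
  qed
  show "is_dctrs R" using assms(1) unfolding is_pcdctrs_def by simp
  show "basic R (lhs \<rho>)" "constr_term R (rhs \<rho>)" using H by simp_all
  fix i assume "i < length (conds \<rho>)"
  then have mem: "conds \<rho> ! i \<in> set (conds \<rho>)" by (rule nth_mem)
  from bspec[OF conjunct2[OF conjunct2[OF H]] mem]
  have "case conds \<rho> ! i of (s, t) \<Rightarrow> basic R s \<and> constr_term R t" .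
  then show "basic R (fst (conds \<rho> ! i)) \<and> constr_term R (snd (conds \<rho> ! i))"
    by (simp add: split_beta)
qed

lemma constr_injz_iff: "is_dctrs R \<Longrightarrow> constr_term (injz R) t \<longleftrightarrow> (\<forall>f\<in>defs R. InjS f \<notin> funs t)"
  unfolding constr_term_def by (auto simp: defs_injz)

lemma basic_inj: "is_dctrs R \<Longrightarrow> basic R l \<Longrightarrow> basic (injz R) (inj_term l)"
  unfolding basic_def by (auto simp: defs_injz constr_emb)

lemma constr_pair: "is_dctrs R \<Longrightarrow> constr_term (injz R) (pair a b) \<longleftrightarrow> constr_term (injz R) a \<and> constr_term (injz R) b"
  by (auto simp: constr_injz_iff pair_def)

lemma ground_pair: "ground (pair a b) \<longleftrightarrow> ground a \<and> ground b"
  and subst_pair: "subst \<sigma> (pair a b) = pair (subst \<sigma> a) (subst \<sigma> b)"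
  and pair_inj: "pair a b = pair c d \<longleftrightarrow> a = c \<and> b = d"
  by (auto simp: pair_def ground_def)

lemma injz_dctrs:
  fixes R :: "('l, 'f, 'v::linorder) lctrs"
  assumes pc: "is_pcdctrs R" shows "is_dctrs (injz R)"
proof -
  have D: "is_dctrs R" using pc by (simp add: is_pcdctrs_def)
  have fin: "finite (injz R)" using D unfolding is_dctrs_def injz_def by simp
  have uq: "\<rho>1 = \<rho>2" if "(\<beta>, \<rho>1) \<in> injz R" "(\<beta>, \<rho>2) \<in> injz R" for \<beta> \<rho>1 \<rho>2
  proof -
    from that obtain r1 r2 where "(\<beta>, r1) \<in> R" "(\<beta>, r2) \<in> R" "\<rho>1 = irule \<beta> r1" "\<rho>2 = irule \<beta> r2"
      unfolding mem_injz by blast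
    then show "\<rho>1 = \<rho>2" using dctrs_unique[OF D] by blast
  qed
  have uniq: "\<forall>(\<beta>, \<rho>) \<in> injz R. \<forall>(\<beta>', \<rho>') \<in> injz R. \<beta> = \<beta>' \<longrightarrow> \<rho> = \<rho>'"
    using uq by fast
  have rl: "(\<exists>f ts. lhs \<rho>' = Fun f ts)
       \<and> vars (rhs \<rho>') \<subseteq> vars (lhs \<rho>') \<union> cvars (conds \<rho>')
       \<and> (\<forall>i < length (conds \<rho>').
            vars (fst (conds \<rho>' ! i)) \<subseteq> vars (lhs \<rho>') \<union> (\<Union>j<i. vars (snd (conds \<rho>' ! j))))"
    if rin: "(\<beta>, \<rho>') \<in> injz R" for \<beta> \<rho>'
  proof -
    obtain \<rho> where r: "(\<beta>, \<rho>) \<in> R" "\<rho>' = irule \<beta> \<rho>" using rin unfolding mem_injz by blast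
    let ?n = "length (conds \<rho>)"
    obtain f ts where l: "lhs \<rho> = Fun f ts" using dctrsD(1)[OF D r(1)] by blast
    have c1': "cvars (conds \<rho>') = (\<Union>i<?n. Inl ` vars (fst (conds \<rho> ! i))
       \<union> (Inl ` vars (snd (conds \<rho> ! i)) \<union> {Inr i}))" using r(2) c1 by simp
    have cv: "Inl ` cvars (conds \<rho>) \<subseteq> cvars (conds \<rho>')" "Inr ` {..<?n} \<subseteq> cvars (conds \<rho>')"
  proof -
    show "Inl ` cvars (conds \<rho>) \<subseteq> cvars (conds \<rho>')"
      unfolding c1' unfolding cvars_nth image_UN image_Un by (rule UN_mono) auto
    show "Inr ` {..<?n} \<subseteq> cvars (conds \<rho>')"
    proof
      fix z :: "'v + nat" assume "z \<in> Inr ` {..<?n}"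
      then obtain i where i: "i \<in> {..<?n}" "z = Inr i" by blast
      show "z \<in> cvars (conds \<rho>')" unfolding c1' by (rule UN_I[OF i(1)]) (simp add: i(2))
    qed
  qed
    have vr: "vars (rhs \<rho>) \<subseteq> vars (lhs \<rho>) \<union> cvars (conds \<rho>)" by (rule dctrsD(2)[OF D r(1)])
    have vb: "Vb \<rho> \<subseteq> vars (lhs \<rho>) \<union> cvars (conds \<rho>)"
      using Vb_sub[of \<rho>] unfolding WV_def cvars_nth by blast
    have A: "vars (rhs \<rho>') \<subseteq> vars (lhs \<rho>') \<union> cvars (conds \<rho>')"
    proof -
      have "vars (rhs \<rho>') = Inl ` vars (rhs \<rho>) \<union> (Inl ` Vb \<rho> \<union> Inr ` {..<?n})" using r(2) r1 by simp
      also have "\<dots> \<subseteq> Inl ` (vars (lhs \<rho>) \<union> cvars (conds \<rho>)) \<union> Inr ` {..<?n}"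
        using image_mono[OF vr, of Inl] image_mono[OF vb, of Inl] by blast
      also have "\<dots> \<subseteq> vars (lhs \<rho>') \<union> cvars (conds \<rho>')"
      proof -
        have "vars (lhs \<rho>') = Inl ` vars (lhs \<rho>)" using r(2) by simp
        then show ?thesis using cv unfolding image_Un by blast
      qed
      finally show ?thesis .
    qed
    have B: "vars (fst (conds \<rho>' ! i)) \<subseteq> vars (lhs \<rho>') \<union> (\<Union>j<i. vars (snd (conds \<rho>' ! j)))"
      if i: "i < length (conds \<rho>')" for i
    proof -
      have i': "i < ?n" using i r(2) by simp
      have e1: "vars (fst (conds \<rho>' ! i)) = Inl ` vars (fst (conds \<rho> ! i))" using i' r(2) by simp
      have e2: "vars (snd (conds \<rho>' ! j)) = Inl ` vars (snd (conds \<rho> ! j)) \<union> {Inr j}" if "j < i" for j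
        using that i' r(2) by (simp add: pair_def)
      have "Inl ` vars (fst (conds \<rho> ! i)) \<subseteq> Inl ` (vars (lhs \<rho>) \<union> (\<Union>j<i. vars (snd (conds \<rho> ! j))))"
        using image_mono[OF dctrsD(3)[OF D r(1) i'], of Inl] .
      also have "\<dots> \<subseteq> vars (lhs \<rho>') \<union> (\<Union>j<i. vars (snd (conds \<rho>' ! j)))"
      proof -
        have L: "vars (lhs \<rho>') = Inl ` vars (lhs \<rho>)" using r(2) by simp
        show ?thesis unfolding image_Un image_UN L
        proof (rule Un_mono[OF order_refl], rule UN_mono[OF order_refl])
          fix j assume "j \<in> {..<i}"
          then show "Inl ` vars (snd (conds \<rho> ! j)) \<subseteq> vars (snd (conds \<rho>' ! j))"
            using e2[of j] by (simp add: subset_insertI)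
        qed
      qed
      finally show ?thesis using e1 by simp
    qed
    show ?thesis using A B r(2) l by simp
  qed
  show ?thesis unfolding is_dctrs_def
  proof (intro conjI fin uniq ballI)
    fix x assume "x \<in> injz R"
    then show "case x of (\<beta>, \<rho>) \<Rightarrow> (\<exists>f ts. lhs \<rho> = Fun f ts)
       \<and> vars (rhs \<rho>) \<subseteq> vars (lhs \<rho>) \<union> cvars (conds \<rho>)
       \<and> (\<forall>i < length (conds \<rho>).
            vars (fst (conds \<rho> ! i)) \<subseteq> vars (lhs \<rho>) \<union> (\<Union>j<i. vars (snd (conds \<rho> ! j))))"
      using rl by (cases x) simp
  qed
qed


lemma constr_Lab: "is_dctrs R \<Longrightarrow> (\<forall>a\<in>set as. constr_term (injz R) a) \<Longrightarrow> constr_term (injz R) (Fun (LabS \<beta>) as)"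
  by (auto simp: constr_injz_iff)

lemma injz_pc:
  fixes R :: "('l, 'f, 'v::linorder) lctrs"
  assumes pc: "is_pcdctrs R" shows "is_pcdctrs (injz R)"
proof -
  have D: "is_dctrs R" using pc by (simp add: is_pcdctrs_def)
  have rl: "basic (injz R) (lhs \<rho>') \<and> constr_term (injz R) (rhs \<rho>')
      \<and> (\<forall>(s, t) \<in> set (conds \<rho>'). basic (injz R) s \<and> constr_term (injz R) t)"
    if rin: "(\<beta>, \<rho>') \<in> injz R" for \<beta> \<rho>'
  proof -
    obtain \<rho> where r: "(\<beta>, \<rho>) \<in> R" "\<rho>' = irule \<beta> \<rho>" using rin unfolding mem_injz by blast
    have 1: "basic (injz R) (lhs \<rho>')" using r basic_inj[OF D pcD(2)[OF pc r(1)]] by simp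
    have 2: "constr_term (injz R) (rhs \<rho>')"
      unfolding r(2) irule_rhs constr_pair[OF D]
      by (intro conjI constr_emb[OF D] constr_Lab[OF D]) (auto simp: constr_term_def)
    have 3: "basic (injz R) s \<and> constr_term (injz R) t" if st: "(s, t) \<in> set (conds \<rho>')" for s t
    proof -
      from st obtain i where i: "i < length (conds \<rho>)"
        "(s, t) = (inj_term (fst (conds \<rho> ! i)), pair (emb (snd (conds \<rho> ! i))) (Var (Inr i)))"
        unfolding r(2) irule_conds set_map by auto
      have "basic (injz R) s" using i basic_inj[OF D conjunct1[OF pcD(4)[OF pc r(1) i(1)]]] by simp
      moreover have "constr_term (injz R) (Var (Inr i))" by (simp add: constr_term_def)
      then have "constr_term (injz R) t" using i by (simp add: constr_pair[OF D] constr_emb[OF D])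
      ultimately show ?thesis ..
    qed
    show ?thesis using 1 2 3 by blast
  qed
  show ?thesis unfolding is_pcdctrs_def
  proof (intro conjI injz_dctrs[OF pc] ballI)
    fix x assume "x \<in> injz R"
    then show "case x of (\<beta>, \<rho>) \<Rightarrow> basic (injz R) (lhs \<rho>) \<and> constr_term (injz R) (rhs \<rho>)
      \<and> (\<forall>(s, t) \<in> set (conds \<rho>). basic (injz R) s \<and> constr_term (injz R) t)"
      using rl by (cases x) simp
  qed
qed

lemma lhs_injz_InjS:
  assumes "is_dctrs R" "(\<beta>, \<rho>') \<in> injz R"
  shows "\<exists>f\<in>defs R. \<exists>ts. lhs \<rho>' = Fun (InjS f) ts"
proof -
  obtain \<rho> where r: "(\<beta>, \<rho>) \<in> R" "\<rho>' = irule \<beta> \<rho>" using assms(2) unfolding mem_injz by blast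
  obtain f ts where l: "lhs \<rho> = Fun f ts" using dctrsD(1)[OF assms(1) r(1)] by blast
  have "f \<in> defs R" unfolding defs_iff using r(1) l by blast
  then show ?thesis using r(2) l by simp
qed

lemma subst_lhs_not_constr:
  assumes "is_dctrs R" "(\<beta>, \<rho>') \<in> injz R"
  shows "\<not> constr_term (injz R) (subst \<sigma> (lhs \<rho>'))"
  using lhs_injz_InjS[OF assms] by (auto simp: constr_injz_iff[OF assms(1)])

lemma cstep_not_constr:
  assumes D: "is_dctrs R"
  shows "cstep (injz R) u v \<Longrightarrow> \<not> constr_term (injz R) u"
proof (induction rule: cstep.induct)
  case (top \<beta> \<rho> \<sigma>)
  then show ?case using subst_lhs_not_constr[OF D] by blast
next
  case (ctxt u u' ss ts f)
  then show ?case by (auto simp: constr_term_def)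
qed

lemma lhs_match_not_constr:
  assumes D: "is_dctrs R" shows "lhs_match (injz R) u \<Longrightarrow> \<not> constr_term (injz R) u"
  unfolding lhs_match_def using subst_lhs_not_constr[OF D] by blast

lemma hat_Some:
  assumes "length \<pi>s = n" "\<forall>i<n. \<pi>s ! i = [pp i] \<and> hat (pp i) = Some (hh i)"
  shows "hat (TT \<beta> \<tau> \<pi>s) = Some (Fun (LabS \<beta>) (map (\<lambda>y. emb (the (\<tau> y))) (sorted_list_of_set (dom \<tau>)) @ map hh [0..<n]))"
proof -
  have e: "map (\<lambda>\<pi>. case \<pi> of [p] \<Rightarrow> hat p | _ \<Rightarrow> None) \<pi>s = map (\<lambda>i. Some (hh i)) [0..<n]"
    using assms by (intro nth_equalityI) auto
  show ?thesis unfolding hat.simps Let_def e by (simp add: comp_def image_iff)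
qed

lemma hat_inv:
  assumes "hat (TT \<beta> \<tau> \<pi>s) = Some h"
  shows "\<exists>hs. h = Fun (LabS \<beta>) (map (\<lambda>y. emb (the (\<tau> y))) (sorted_list_of_set (dom \<tau>)) @ hs)
     \<and> length hs = length \<pi>s \<and> (\<forall>i<length \<pi>s. \<exists>p. \<pi>s ! i = [p] \<and> hat p = Some (hs ! i))"
proof -
  define hs0 where "hs0 = map (\<lambda>\<pi>. case \<pi> of [p] \<Rightarrow> hat p | _ \<Rightarrow> None) \<pi>s"
  have N: "None \<notin> set hs0" and h: "h = Fun (LabS \<beta>) (map (\<lambda>y. emb (the (\<tau> y))) (sorted_list_of_set (dom \<tau>)) @ map the hs0)"
    using assms unfolding hat.simps Let_def hs0_def[symmetric] by (auto split: if_splits)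
  have "\<exists>p. \<pi>s ! i = [p] \<and> hat p = Some (map the hs0 ! i)" if i: "i < length \<pi>s" for i
  proof -
    have "hs0 ! i \<noteq> None" using N i unfolding hs0_def by (metis length_map nth_mem)
    then show ?thesis using i unfolding hs0_def
      by (cases "\<pi>s ! i" rule: list.exhaust; cases "tl (\<pi>s ! i)") auto
  qed
  then show ?thesis using h unfolding hs0_def by (intro exI[of _ "map the hs0"]) (simp add: hs0_def)
qed


lemma subst_basic_not_constr: "basic R l \<Longrightarrow> \<not> constr_term R (subst \<sigma> l)"
  unfolding basic_def constr_term_def by auto

lemma rstep_src: assumes "is_pcdctrs R" shows "rstep R a b \<Longrightarrow> \<not> constr_term R (fst a)"
  by (induction rule: rstep.induct) (simp add: subst_basic_not_constr pcD(2)[OF assms])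

lemma one_step:
  assumes "Q\<^sup>*\<^sup>* a b" "S a" "\<not> S b" "\<And>x y. Q x y \<Longrightarrow> S x \<and> \<not> S y"
  shows "Q a b"
  using assms(1)
proof (cases rule: converse_rtranclpE)
  case base then show ?thesis using assms(2,3) by simp
next
  case (step c)
  have "\<not> S c" using assms(4)[OF step(1)] by simp
  from step(2) have "c = b"
  proof (cases rule: converse_rtranclpE)
    case base then show ?thesis .
  next
    case (step d) then show ?thesis using assms(4) \<open>\<not> S c\<close> by blast
  qed
  then show ?thesis using step(1) by simp
qed

lemma cond_vars_rv: "i < length (conds \<rho>) \<Longrightarrow>
   vars (fst (conds \<rho> ! i)) \<subseteq> rule_vars \<rho> \<and> vars (snd (conds \<rho> ! i)) \<subseteq> rule_vars \<rho>"
  unfolding rule_vars_def cvars_nth by blast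

lemma lr_vars_rv: "vars (lhs \<rho>) \<subseteq> rule_vars \<rho>" "vars (rhs \<rho>) \<subseteq> rule_vars \<rho>"
  unfolding rule_vars_def by blast+

lemma dom_restr[simp]: "dom (restr \<sigma> X) = X"
  and restr_in: "y \<in> X \<Longrightarrow> restr \<sigma> X y = Some (\<sigma> y)"
  by (auto simp: restr_def dom_def)

lemma constr_subterm: "constr_term R' t \<Longrightarrow> u \<in> subterms t \<Longrightarrow> constr_term R' u"
  unfolding constr_term_def using subterm_funs by blast

lemma ground_Fun: "ground (Fun f as) \<longleftrightarrow> (\<forall>a\<in>set as. ground a)"
  by (auto simp: ground_def)


lemma fwd:
  fixes R :: "('l, 'f, 'v::linorder) lctrs"
  assumes pc: "is_pcdctrs R"
  shows "rstep R a b \<Longrightarrow> \<exists>p h. snd b = p # snd a \<and> hat p = Some h \<and> ground h \<and> constr_term (injz R) h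
     \<and> ground (fst b) \<and> constr_term R (fst b) \<and> cstep (injz R) (inj_term (fst a)) (pair (emb (fst b)) h)"
proof (induction rule: rstep.induct)
  case (1 \<beta> \<rho> \<sigma> \<pi> \<pi>s)
  have D: "is_dctrs R" using pc by (simp add: is_pcdctrs_def)
  let ?n = "length (conds \<rho>)"
  note IH = 1(5)
  have gc: "gc_subst R (rule_vars \<rho>) \<sigma>" by (rule 1(2))
  have ci: "\<exists>p h. \<pi>s ! i = [p] \<and> hat p = Some h \<and> ground h \<and> constr_term (injz R) h
     \<and> cstep (injz R) (inj_term (subst \<sigma> (fst (conds \<rho> ! i)))) (pair (emb (subst \<sigma> (snd (conds \<rho> ! i)))) h)"
    if i: "i < ?n" for i
  proof -
    let ?Q = "\<lambda>x y. rstep R x y \<and> (\<exists>p h. snd y = p # snd x \<and> hat p = Some h \<and> ground h \<and> constr_term (injz R) h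
     \<and> ground (fst y) \<and> constr_term R (fst y) \<and> cstep (injz R) (inj_term (fst x)) (pair (emb (fst y)) h))"
    let ?S = "\<lambda>x. \<not> constr_term R (fst x)"
    have st: "?Q\<^sup>*\<^sup>* (subst \<sigma> (fst (conds \<rho> ! i)), []) (subst \<sigma> (snd (conds \<rho> ! i)), \<pi>s ! i)"
      using IH i by blast
    have S1: "?S (subst \<sigma> (fst (conds \<rho> ! i)), [])"
      using subst_basic_not_constr conjunct1[OF pcD(4)[OF pc 1(1) i]] by simp
    have S2: "\<not> ?S (subst \<sigma> (snd (conds \<rho> ! i)), \<pi>s ! i)"
      using constr_subst[OF gc conjunct2[OF cond_vars_rv[OF i]] conjunct2[OF pcD(4)[OF pc 1(1) i]]] by simp
    have "?Q (subst \<sigma> (fst (conds \<rho> ! i)), []) (subst \<sigma> (snd (conds \<rho> ! i)), \<pi>s ! i)"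
      by (rule one_step[OF st S1 S2]) (use rstep_src[OF pc] in auto)
    then show ?thesis by auto
  qed
  have "\<forall>i. \<exists>ph. i < ?n \<longrightarrow> \<pi>s ! i = [fst ph] \<and> hat (fst ph) = Some (snd ph) \<and> ground (snd ph)
     \<and> constr_term (injz R) (snd ph)
     \<and> cstep (injz R) (inj_term (subst \<sigma> (fst (conds \<rho> ! i)))) (pair (emb (subst \<sigma> (snd (conds \<rho> ! i)))) (snd ph))"
  proof
    fix i show "\<exists>ph. i < ?n \<longrightarrow> \<pi>s ! i = [fst ph] \<and> hat (fst ph) = Some (snd ph) \<and> ground (snd ph)
     \<and> constr_term (injz R) (snd ph)
     \<and> cstep (injz R) (inj_term (subst \<sigma> (fst (conds \<rho> ! i)))) (pair (emb (subst \<sigma> (snd (conds \<rho> ! i)))) (snd ph))"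
    proof (cases "i < ?n")
      case True
      then obtain p h where "\<pi>s ! i = [p] \<and> hat p = Some h \<and> ground h \<and> constr_term (injz R) h
     \<and> cstep (injz R) (inj_term (subst \<sigma> (fst (conds \<rho> ! i)))) (pair (emb (subst \<sigma> (snd (conds \<rho> ! i)))) h)"
        using ci by blast
      then show ?thesis by (intro exI[of _ "(p, h)"]) simp
    qed simp
  qed
  from choice[OF this] obtain F where F0: "\<forall>i. i < ?n \<longrightarrow> \<pi>s ! i = [fst (F i)] \<and> hat (fst (F i)) = Some (snd (F i)) \<and> ground (snd (F i))
     \<and> constr_term (injz R) (snd (F i))
     \<and> cstep (injz R) (inj_term (subst \<sigma> (fst (conds \<rho> ! i)))) (pair (emb (subst \<sigma> (snd (conds \<rho> ! i)))) (snd (F i)))"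
    by blast
  note F = F0[rule_format]
  define hh where "hh = (\<lambda>i. snd (F i))"
  define \<sigma>' :: "'v + nat \<Rightarrow> (('f, 'l) isym, 'v + nat) term" where "\<sigma>' = case_sum (\<lambda>x. emb (\<sigma> x)) hh"
  have s'l[simp]: "\<sigma>' (Inl x) = emb (\<sigma> x)" for x by (simp add: \<sigma>'_def)
  have s'r[simp]: "\<sigma>' (Inr i) = hh i" for i by (simp add: \<sigma>'_def)
  have se[simp]: "subst \<sigma>' (emb t) = emb (subst \<sigma> t)" for t by (rule subst_emb) simp
  define \<rho>' where "\<rho>' = irule \<beta> \<rho>"
  have rin: "(\<beta>, \<rho>') \<in> injz R" unfolding mem_injz \<rho>'_def using 1(1) by blast
  obtain f ts where l: "lhs \<rho> = Fun f ts" using dctrsD(1)[OF D 1(1)] by blast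
  have gc': "gc_subst (injz R) (rule_vars \<rho>') \<sigma>'"
    unfolding gc_subst_def
  proof
    fix z assume "z \<in> rule_vars \<rho>'"
    then have "z \<in> Inl ` rule_vars \<rho> \<union> Inr ` {..<?n}" unfolding \<rho>'_def by (rule subsetD[OF rule_vars_irule])
    then show "ground (\<sigma>' z) \<and> constr_term (injz R) (\<sigma>' z)"
    proof
      assume "z \<in> Inl ` rule_vars \<rho>"
      then obtain x where x: "z = Inl x" "x \<in> rule_vars \<rho>" by blast
      then show ?thesis using gc constr_emb[OF D] unfolding gc_subst_def by simp
    next
      assume "z \<in> Inr ` {..<?n}"
      then obtain i where x: "z = Inr i" "i < ?n" by blast
      then show ?thesis using F[OF x(2)] by (simp add: hh_def)
    qed
  qed
  have lhs_eq: "subst \<sigma>' (lhs \<rho>') = inj_term (subst \<sigma> (lhs \<rho>))"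
    unfolding \<rho>'_def irule_lhs by (rule subst_inj_term) (simp_all add: l)
  have ps: "\<forall>u \<in> psubterms (subst \<sigma>' (lhs \<rho>')). \<not> lhs_match (injz R) u"
  proof
    fix u assume "u \<in> psubterms (subst \<sigma>' (lhs \<rho>'))"
    then obtain x where "u \<in> subterms (emb x)" unfolding lhs_eq l by auto
    then have "constr_term (injz R) u" using constr_subterm constr_emb[OF D] by blast
    then show "\<not> lhs_match (injz R) u" using lhs_match_not_constr[OF D] by blast
  qed
  have cs: "\<forall>i < length (conds \<rho>'). (cstep (injz R))\<^sup>*\<^sup>* (subst \<sigma>' (fst (conds \<rho>' ! i))) (subst \<sigma>' (snd (conds \<rho>' ! i)))"
  proof (intro allI impI)
    fix i assume "i < length (conds \<rho>')"
    then have i: "i < ?n" by (simp add: \<rho>'_def)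
    obtain g us where si: "fst (conds \<rho> ! i) = Fun g us"
      using conjunct1[OF pcD(4)[OF pc 1(1) i]] unfolding basic_def by blast
    have "subst \<sigma>' (fst (conds \<rho>' ! i)) = inj_term (subst \<sigma> (fst (conds \<rho> ! i)))"
      using i unfolding \<rho>'_def by (simp add: subst_inj_term si subst_emb)
    moreover have "subst \<sigma>' (snd (conds \<rho>' ! i)) = pair (emb (subst \<sigma> (snd (conds \<rho> ! i)))) (hh i)"
      using i unfolding \<rho>'_def by (simp add: subst_pair subst_emb)
    ultimately show "(cstep (injz R))\<^sup>*\<^sup>* (subst \<sigma>' (fst (conds \<rho>' ! i))) (subst \<sigma>' (snd (conds \<rho>' ! i)))"
      using F[OF i] by (auto simp: hh_def)
  qed
  have step: "cstep (injz R) (subst \<sigma>' (lhs \<rho>')) (subst \<sigma>' (rhs \<rho>'))"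
    by (rule cstep.top[OF rin gc' ps cs])
  define h where "h = Fun (LabS \<beta>) (map (\<lambda>y. emb (\<sigma> y)) (sorted_list_of_set (Vb \<rho>)) @ map hh [0..<?n])"
  have rhs_eq: "subst \<sigma>' (rhs \<rho>') = pair (emb (subst \<sigma> (rhs \<rho>))) h"
    unfolding \<rho>'_def irule_rhs h_def by (simp add: subst_pair subst_emb comp_def)
  have hat_eq: "hat (TT \<beta> (restr \<sigma> (Vb \<rho>)) \<pi>s) = Some h"
  proof -
    have "hat (TT \<beta> (restr \<sigma> (Vb \<rho>)) \<pi>s) = Some (Fun (LabS \<beta>) (map (\<lambda>y. emb (the (restr \<sigma> (Vb \<rho>) y)))
         (sorted_list_of_set (dom (restr \<sigma> (Vb \<rho>)))) @ map hh [0..<?n]))"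
      by (rule hat_Some[where pp = "\<lambda>i. fst (F i)"]) (use 1(4) F in \<open>auto simp: hh_def\<close>)
    also have "\<dots> = Some h" unfolding h_def dom_restr
      by (simp add: restr_in)
    finally show ?thesis .
  qed
  have Vbrv: "Vb \<rho> \<subseteq> rule_vars \<rho>" by (rule subset_trans[OF Vb_sub WV_rule_vars])
  have gh: "ground h \<and> constr_term (injz R) h"
  proof -
    have "ground (emb (\<sigma> y)) \<and> constr_term (injz R) (emb (\<sigma> y))" if "y \<in> Vb \<rho>" for y
      using that Vbrv gc constr_emb[OF D] unfolding gc_subst_def by auto
    moreover have "ground (hh i) \<and> constr_term (injz R) (hh i)" if "i < ?n" for i
      using F[OF that] by (simp add: hh_def)
    ultimately have A: "\<forall>a \<in> set (map (\<lambda>y. emb (\<sigma> y)) (sorted_list_of_set (Vb \<rho>)) @ map hh [0..<?n]).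
        ground a \<and> constr_term (injz R) a" by auto
    show ?thesis unfolding h_def ground_Fun using A constr_Lab[OF D] by blast
  qed
  have gr: "ground (subst \<sigma> (rhs \<rho>)) \<and> constr_term R (subst \<sigma> (rhs \<rho>))"
    by (rule constr_subst[OF gc lr_vars_rv(2) pcD(3)[OF pc 1(1)]])
  show ?case
    using step hat_eq gh gr unfolding lhs_eq rhs_eq by auto
qed


lemma emb_list_inj: "map emb xs = map emb ys \<Longrightarrow> xs = ys"
proof (induction xs arbitrary: ys)
  case Nil then show ?case by simp
next
  case (Cons x xs) then show ?case by (cases ys) (auto dest: emb_inj)
qed

lemma basic_subst:
  fixes R :: "('l, 'f, 'v) lctrs" and s :: "('f, 'v) term" and \<sigma> :: "'v \<Rightarrow> ('f, 'v) term"
  assumes "basic R s" "\<forall>x\<in>vars s. ground (\<sigma> x) \<and> constr_term R (\<sigma> x)"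
  shows "basic R (subst \<sigma> s) \<and> ground (subst \<sigma> s)"
proof -
  obtain f us where s: "s = Fun f us" "f \<in> defs R" "\<forall>u\<in>set us. constr_term R u"
    using assms(1) unfolding basic_def by blast
  have gc: "gc_subst R (vars s) \<sigma>" using assms(2) unfolding gc_subst_def by blast
  have "ground (subst \<sigma> u) \<and> constr_term R (subst \<sigma> u)" if "u \<in> set us" for u
    by (rule constr_subst[OF gc]) (use that s in auto)
  then show ?thesis using s unfolding basic_def by (auto simp: ground_Fun)
qed

lemma map_eq_nth_conv: "map f xs = map g xs \<Longrightarrow> x \<in> set xs \<Longrightarrow> f x = g x"
  by (simp add: map_eq_conv)


lemma bwd:
  fixes R :: "('l, 'f, 'v::linorder) lctrs"
  assumes pc: "is_pcdctrs R"
  shows "cstep (injz R) u v \<Longrightarrow> \<forall>s. u = inj_term s \<longrightarrow> basic R s \<longrightarrow> ground s \<longrightarrow>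
     (\<exists>t h. v = pair (emb t) h \<and> ground t \<and> constr_term R t \<and> ground h \<and> constr_term (injz R) h
        \<and> (\<forall>\<pi>. safe_tt R \<pi> \<longrightarrow> hat \<pi> = Some h \<longrightarrow> rstep R (s, []) (t, [\<pi>])))"
proof (induction rule: cstep.induct)
  case (ctxt u u' ss ts f)
  have D: "is_dctrs R" using pc by (simp add: is_pcdctrs_def)
  show ?case
  proof (intro allI impI)
    fix s :: "('f, 'v) term" assume e: "Fun f (ss @ u # ts) = inj_term s" and b: "basic R s"
    obtain g us where s: "s = Fun g us" using b unfolding basic_def by blast
    have "u \<in> set (map emb us)" using e s by (metis in_set_conv_decomp inj_term.simps(1) term.inject(2))
    then obtain x where "u = emb x" by auto
    then have "constr_term (injz R) u" using constr_emb[OF D] by simp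
    with cstep_not_constr[OF D ctxt(1)] show "\<exists>t h. Fun f (ss @ u' # ts) = pair (emb t) h \<and> ground t \<and> constr_term R t \<and> ground h \<and> constr_term (injz R) h
        \<and> (\<forall>\<pi>. safe_tt R \<pi> \<longrightarrow> hat \<pi> = Some h \<longrightarrow> rstep R (s, []) (t, [\<pi>]))" by simp
  qed
next
  case (top \<beta> \<rho>' \<sigma>')
  have D: "is_dctrs R" using pc by (simp add: is_pcdctrs_def)
  obtain \<rho> where r: "(\<beta>, \<rho>) \<in> R" "\<rho>' = irule \<beta> \<rho>" using top(1) unfolding mem_injz by blast
  let ?n = "length (conds \<rho>)"
  have len': "length (conds \<rho>') = ?n" using r(2) by simp
  have c'i: "conds \<rho>' ! i = (inj_term (fst (conds \<rho> ! i)), pair (emb (snd (conds \<rho> ! i))) (Var (Inr i)))"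
    if "i < ?n" for i using that r(2) by simp
  note IH = top(4)
  obtain f ls where l: "lhs \<rho> = Fun f ls" using dctrsD(1)[OF D r(1)] by blast
  show ?case
  proof (intro allI impI)
    fix s :: "('f, 'v) term"
    assume e: "subst \<sigma>' (lhs \<rho>') = inj_term s" and b: "basic R s" and gs: "ground s"
    obtain g us where s: "s = Fun g us" "g \<in> defs R" "\<forall>u\<in>set us. constr_term R u"
      using b unfolding basic_def by blast
    have fg: "f = g" and m: "map (\<lambda>l. subst \<sigma>' (emb l)) ls = map emb us"
      using e s(1) r(2) l by (simp_all add: comp_def)
    have vus: "vars u = {}" if "u \<in> set us" for u
      using gs that s(1) unfolding ground_def by auto
    define EV where "EV x \<longleftrightarrow> (\<exists>w. \<sigma>' (Inl x) = emb w \<and> ground w \<and> constr_term R w)" for x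
    define \<sigma> where "\<sigma> x = unemb (\<sigma>' (Inl x))" for x
    have EVD: "\<sigma>' (Inl x) = emb (\<sigma> x) \<and> ground (\<sigma> x) \<and> constr_term R (\<sigma> x)" if "EV x" for x
      using that unfolding EV_def \<sigma>_def by auto
    have EVm: "EV x" if ema: "subst \<sigma>' (emb t0) = emb T" "x \<in> vars t0" "ground T" "constr_term R T" for t0 T x
    proof -
      obtain w where w: "\<sigma>' (Inl x) = emb w" "funs w \<subseteq> funs T" "vars w \<subseteq> vars T"
        using emb_match[OF ema(1,2)] by blast
      then show ?thesis using ema(3,4) unfolding EV_def ground_def constr_term_def by blast
    qed
    have EVl: "EV x" if xl: "x \<in> vars (lhs \<rho>)" for x
    proof -
      obtain j where j: "j < length ls" "x \<in> vars (ls ! j)" using xl l by (auto simp: in_set_conv_nth)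
      have len: "length ls = length us" using m by (metis length_map)
      have "subst \<sigma>' (emb (ls ! j)) = emb (us ! j)" using m j(1) len by (metis nth_map)
      moreover have "us ! j \<in> set us" using j(1) len by simp
      ultimately show ?thesis using EVm[OF _ j(2)] vus s(3) unfolding ground_def by blast
    qed
    have cond_res: "\<exists>T H. subst \<sigma>' (emb (snd (conds \<rho> ! i))) = emb T \<and> \<sigma>' (Inr i) = H \<and> ground T
        \<and> constr_term R T \<and> ground H \<and> constr_term (injz R) H
        \<and> (\<forall>\<pi>. safe_tt R \<pi> \<longrightarrow> hat \<pi> = Some H \<longrightarrow> rstep R (subst \<sigma> (fst (conds \<rho> ! i)), []) (T, [\<pi>]))"
      if i: "i < ?n" and ev: "\<forall>x\<in>vars (fst (conds \<rho> ! i)). EV x" for i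
    proof -
      have bi: "basic R (fst (conds \<rho> ! i))" using pcD(4)[OF pc r(1) i] by simp
      then obtain g' vs where si: "fst (conds \<rho> ! i) = Fun g' vs" unfolding basic_def by blast
      have ev': "\<forall>x\<in>vars (fst (conds \<rho> ! i)). \<sigma>' (Inl x) = emb (\<sigma> x)" using ev EVD by blast
      have src: "subst \<sigma>' (fst (conds \<rho>' ! i)) = inj_term (subst \<sigma> (fst (conds \<rho> ! i)))"
        unfolding c'i[OF i] fst_conv by (rule subst_inj_term[OF ev']) (simp add: si)
      have tgt: "subst \<sigma>' (snd (conds \<rho>' ! i)) = pair (subst \<sigma>' (emb (snd (conds \<rho> ! i)))) (\<sigma>' (Inr i))"
        unfolding c'i[OF i] snd_conv subst_pair by simp
      have bg: "basic R (subst \<sigma> (fst (conds \<rho> ! i))) \<and> ground (subst \<sigma> (fst (conds \<rho> ! i)))"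
        by (rule basic_subst[OF bi]) (use ev EVD in blast)
      let ?Q = "\<lambda>x y. cstep (injz R) x y \<and> (\<forall>s. x = inj_term s \<longrightarrow> basic R s \<longrightarrow> ground s \<longrightarrow>
       (\<exists>t h. y = pair (emb t) h \<and> ground t \<and> constr_term R t \<and> ground h \<and> constr_term (injz R) h
          \<and> (\<forall>\<pi>. safe_tt R \<pi> \<longrightarrow> hat \<pi> = Some h \<longrightarrow> rstep R (s, []) (t, [\<pi>]))))"
      have i': "i < length (conds \<rho>')" using i len' by simp
      from IH[rule_format, OF i']
      have st: "?Q\<^sup>*\<^sup>* (inj_term (subst \<sigma> (fst (conds \<rho> ! i)))) (pair (subst \<sigma>' (emb (snd (conds \<rho> ! i)))) (\<sigma>' (Inr i)))"
        unfolding src tgt .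
      then show ?thesis
      proof (cases rule: converse_rtranclpE)
        case base then show ?thesis by (simp add: si pair_def)
      next
        case (step c)
        from step(1) bg obtain T H where c: "c = pair (emb T) H" "ground T" "constr_term R T" "ground H"
          "constr_term (injz R) H" "\<forall>\<pi>. safe_tt R \<pi> \<longrightarrow> hat \<pi> = Some H \<longrightarrow> rstep R (subst \<sigma> (fst (conds \<rho> ! i)), []) (T, [\<pi>])"
          by blast
        have cc: "constr_term (injz R) c" by (simp add: constr_pair[OF D] constr_emb[OF D] c(1,5))
        from step(2) have "c = pair (subst \<sigma>' (emb (snd (conds \<rho> ! i)))) (\<sigma>' (Inr i))"
        proof (cases rule: converse_rtranclpE)
          case base then show ?thesis .
        next
          case (step d) then show ?thesis using cstep_not_constr[OF D] cc by blast
        qed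
        then have e1: "subst \<sigma>' (emb (snd (conds \<rho> ! i))) = emb T" and e2: "\<sigma>' (Inr i) = H"
          using c(1) by (simp_all add: pair_inj)
        show ?thesis using e1 e2 c(2-6) by blast
      qed
    qed
    have EVt: "\<forall>x\<in>vars (snd (conds \<rho> ! i)). EV x" if "i < ?n" for i
      using that
    proof (induction i rule: less_induct)
      case (less i)
      have "\<forall>x\<in>vars (fst (conds \<rho> ! i)). EV x"
      proof
        fix x assume "x \<in> vars (fst (conds \<rho> ! i))"
        then have "x \<in> vars (lhs \<rho>) \<union> (\<Union>j<i. vars (snd (conds \<rho> ! j)))"
          using dctrsD(3)[OF D r(1) less.prems] by blast
        then show "EV x"
        proof
          assume "x \<in> vars (lhs \<rho>)" then show "EV x" by (rule EVl)
        next
          assume "x \<in> (\<Union>j<i. vars (snd (conds \<rho> ! j)))"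
          then obtain j where "j < i" "x \<in> vars (snd (conds \<rho> ! j))" by blast
          then show "EV x" using less.IH[of j] less.prems by simp
        qed
      qed
      from cond_res[OF less.prems this] obtain T where "subst \<sigma>' (emb (snd (conds \<rho> ! i))) = emb T"
        "ground T" "constr_term R T" by blast
      then show ?case using EVm by blast
    qed
    have EVall: "EV x" if "x \<in> rule_vars \<rho>" for x
    proof -
      have "x \<in> WV \<rho>" using that rule_vars_WV[OF D r(1)] by blast
      then show ?thesis unfolding WV_def using EVl EVt by blast
    qed
    have EVx: "\<sigma>' (Inl x) = emb (\<sigma> x)" if "x \<in> rule_vars \<rho>" for x
      using EVall[OF that] EVD by blast
    have gc: "gc_subst R (rule_vars \<rho>) \<sigma>" unfolding gc_subst_def using EVall EVD by blast
    have lrv: "vars (lhs \<rho>) \<subseteq> rule_vars \<rho>" "vars (rhs \<rho>) \<subseteq> rule_vars \<rho>" by (rule lr_vars_rv)+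
    have s_eq: "subst \<sigma> (lhs \<rho>) = s"
    proof -
      have "map emb (map (subst \<sigma>) ls) = map (\<lambda>l. subst \<sigma>' (emb l)) ls"
        unfolding map_map comp_def
      proof (rule map_cong[OF refl])
        fix l0 assume "l0 \<in> set ls"
        then have "vars l0 \<subseteq> rule_vars \<rho>" using lrv(1) l by auto
        then have "subst \<sigma>' (emb l0) = emb (subst \<sigma> l0)" using EVx by (intro subst_emb) blast
        then show "emb (subst \<sigma> l0) = subst \<sigma>' (emb l0)" ..
      qed
      then have "map (subst \<sigma>) ls = us" using m emb_list_inj by metis
      then show ?thesis using l s(1) fg by simp
    qed
    define t where "t = subst \<sigma> (rhs \<rho>)"
    define Lt :: "(('f, 'l) isym, 'v + nat) term" where
      "Lt = Fun (LabS \<beta>) (map (\<lambda>y. Var (Inl y)) (sorted_list_of_set (Vb \<rho>)) @ map (\<lambda>i. Var (Inr i)) [0..<?n])"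
    define h where "h = Fun (LabS \<beta>) (map (\<lambda>y. \<sigma>' (Inl y)) (sorted_list_of_set (Vb \<rho>)) @ map (\<lambda>i. \<sigma>' (Inr i)) [0..<?n])"
    have rhs': "rhs \<rho>' = pair (emb (rhs \<rho>)) Lt" unfolding Lt_def r(2) by simp
    have hL: "subst \<sigma>' Lt = h" unfolding Lt_def h_def by (simp add: comp_def)
    have er: "subst \<sigma>' (emb (rhs \<rho>)) = emb t" unfolding t_def using EVx lrv(2) by (intro subst_emb) blast
    have v_eq: "subst \<sigma>' (rhs \<rho>') = pair (emb t) h" unfolding rhs' subst_pair er hL ..
    have gt: "ground t \<and> constr_term R t" unfolding t_def by (rule constr_subst[OF gc lrv(2) pcD(3)[OF pc r(1)]])
    have gh: "ground h \<and> constr_term (injz R) h"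
    proof -
      have "vars Lt \<subseteq> rule_vars \<rho>'" using lr_vars_rv(2)[of \<rho>'] unfolding rhs' by (auto simp: pair_def)
      moreover have "constr_term (injz R) Lt" unfolding Lt_def by (rule constr_Lab[OF D]) (auto simp: constr_term_def)
      ultimately show ?thesis using constr_subst[OF top(2)] hL by metis
    qed
    have fin: "\<forall>\<pi>. safe_tt R \<pi> \<longrightarrow> hat \<pi> = Some h \<longrightarrow> rstep R (s, []) (t, [\<pi>])"
    proof (intro allI impI)
      fix \<pi> assume safe: "safe_tt R \<pi>" and hp: "hat \<pi> = Some h"
      obtain \<beta>0 \<tau> \<pi>s where \<pi>: "\<pi> = TT \<beta>0 \<tau> \<pi>s" by (cases \<pi>)
      obtain hs where H: "h = Fun (LabS \<beta>0) (map (\<lambda>y. emb (the (\<tau> y))) (sorted_list_of_set (dom \<tau>)) @ hs)"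
        and lh: "length hs = length \<pi>s" and ps: "\<forall>i<length \<pi>s. \<exists>p. \<pi>s ! i = [p] \<and> hat p = Some (hs ! i)"
        using hat_inv[OF hp[unfolded \<pi>]] by blast
      obtain \<rho>0 where r0: "(\<beta>0, \<rho>0) \<in> R" "length \<pi>s = length (conds \<rho>0)" "dom \<tau> = Vb \<rho>0"
        and sp: "\<forall>\<pi>' \<in> set \<pi>s. \<forall>p \<in> set \<pi>'. safe_tt R p"
        using safe unfolding \<pi> by auto
      have b0: "\<beta>0 = \<beta>" using H unfolding h_def by simp
      have rr: "\<rho>0 = \<rho>" using dctrs_unique[OF D] r0(1) r(1) b0 by blast
      have lens: "length \<pi>s = ?n" using r0(2) rr by simp
      have lists: "map (\<lambda>y. emb (the (\<tau> y))) (sorted_list_of_set (Vb \<rho>)) @ hs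
         = map (\<lambda>y. \<sigma>' (Inl y)) (sorted_list_of_set (Vb \<rho>)) @ map (\<lambda>i. \<sigma>' (Inr i)) [0..<?n]"
        using H r0(3) rr unfolding h_def by simp
      then have l1: "map (\<lambda>y. emb (the (\<tau> y))) (sorted_list_of_set (Vb \<rho>)) = map (\<lambda>y. \<sigma>' (Inl y)) (sorted_list_of_set (Vb \<rho>))"
        and l2: "hs = map (\<lambda>i. \<sigma>' (Inr i)) [0..<?n]"
        by (simp_all add: append_eq_append_conv)
      have Vbrv: "Vb \<rho> \<subseteq> rule_vars \<rho>" by (rule subset_trans[OF Vb_sub WV_rule_vars])
      have \<tau>_eq: "\<tau> = restr \<sigma> (Vb \<rho>)"
      proof
        fix y show "\<tau> y = restr \<sigma> (Vb \<rho>) y"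
        proof (cases "y \<in> Vb \<rho>")
          case True
          then have "emb (the (\<tau> y)) = \<sigma>' (Inl y)" using map_eq_nth_conv[OF l1] by simp
          also have "\<dots> = emb (\<sigma> y)" using EVx True Vbrv by blast
          finally have "the (\<tau> y) = \<sigma> y" by (rule emb_inj)
          moreover have "\<tau> y \<noteq> None" using True r0(3) rr by auto
          ultimately show ?thesis using True by (auto simp: restr_def)
        next
          case False
          then show ?thesis using r0(3) rr by (auto simp: restr_def)
        qed
      qed
      have cs: "\<forall>i<?n. (rstep R)\<^sup>*\<^sup>* (subst \<sigma> (fst (conds \<rho> ! i)), []) (subst \<sigma> (snd (conds \<rho> ! i)), \<pi>s ! i)"
      proof (intro allI impI)
        fix i assume i: "i < ?n"
        obtain p where p: "\<pi>s ! i = [p]" "hat p = Some (hs ! i)" using ps lens i by auto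
        have sfp: "safe_tt R p" using sp p(1) i lens by (metis list.set_intros(1) nth_mem)
        have ev: "\<forall>x\<in>vars (fst (conds \<rho> ! i)). EV x" using EVall conjunct1[OF cond_vars_rv[OF i]] by blast
        obtain T H where TH: "subst \<sigma>' (emb (snd (conds \<rho> ! i))) = emb T" "\<sigma>' (Inr i) = H"
          "\<forall>\<pi>. safe_tt R \<pi> \<longrightarrow> hat \<pi> = Some H \<longrightarrow> rstep R (subst \<sigma> (fst (conds \<rho> ! i)), []) (T, [\<pi>])"
          using cond_res[OF i ev] by blast
        have "subst \<sigma>' (emb (snd (conds \<rho> ! i))) = emb (subst \<sigma> (snd (conds \<rho> ! i)))"
          using EVx conjunct2[OF cond_vars_rv[OF i]] by (intro subst_emb) blast
        then have T: "T = subst \<sigma> (snd (conds \<rho> ! i))" using TH(1) emb_inj by metis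
        have "hat p = Some H" using p(2) l2 TH(2) i by simp
        then have "rstep R (subst \<sigma> (fst (conds \<rho> ! i)), []) (subst \<sigma> (snd (conds \<rho> ! i)), \<pi>s ! i)"
          using TH(3) sfp T p(1) by simp
        then show "(rstep R)\<^sup>*\<^sup>* (subst \<sigma> (fst (conds \<rho> ! i)), []) (subst \<sigma> (snd (conds \<rho> ! i)), \<pi>s ! i)" ..
      qed
      have "rstep R (subst \<sigma> (lhs \<rho>), []) (subst \<sigma> (rhs \<rho>), [TT \<beta> (restr \<sigma> (Vb \<rho>)) \<pi>s])"
        using rstep.intros[OF r(1) gc _ lens cs] by (simp add: safe_trace_def)
      then show "rstep R (s, []) (t, [\<pi>])" unfolding s_eq t_def[symmetric] \<pi> b0 \<tau>_eq .
    qed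
    show "\<exists>t h. subst \<sigma>' (rhs \<rho>') = pair (emb t) h \<and> ground t \<and> constr_term R t \<and> ground h \<and> constr_term (injz R) h
        \<and> (\<forall>\<pi>. safe_tt R \<pi> \<longrightarrow> hat \<pi> = Some h \<longrightarrow> rstep R (s, []) (t, [\<pi>]))"
      using v_eq gt gh fin by blast
  qed
qed


theorem mainTheorem17:
  fixes R :: "('l, 'f, 'v::linorder) lctrs"
  assumes "is_pcdctrs R"
  shows "is_pcdctrs (injz R) \<and>
    (\<forall>(s :: ('f, 'v) term) (t :: ('f, 'v) term) (\<pi> :: ('l, 'f, 'v) trace_term).
       basic R s \<and> ground s \<and> safe_tt R \<pi> \<longrightarrow>
       (rstep R (s, []) (t, [\<pi>]) \<longleftrightarrow>
        (\<exists>h. hat \<pi> = Some h \<and> cstep (injz R) (inj_term s) (pair (emb t) h))))"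
proof (intro conjI allI impI iffI)
  show "is_pcdctrs (injz R)" by (rule injz_pc[OF assms])
next
  fix s t :: "('f, 'v) term" and \<pi> :: "('l, 'f, 'v) trace_term"
  assume "rstep R (s, []) (t, [\<pi>])"
  from fwd[OF assms this] obtain p h where "[\<pi>] = [p]" "hat p = Some h"
    "cstep (injz R) (inj_term s) (pair (emb t) h)" by auto
  then show "\<exists>h. hat \<pi> = Some h \<and> cstep (injz R) (inj_term s) (pair (emb t) h)" by auto
next
  fix s t :: "('f, 'v) term" and \<pi> :: "('l, 'f, 'v) trace_term"
  assume H: "basic R s \<and> ground s \<and> safe_tt R \<pi>"
    and "\<exists>h. hat \<pi> = Some h \<and> cstep (injz R) (inj_term s) (pair (emb t) h)"
  then obtain h where h: "hat \<pi> = Some h" "cstep (injz R) (inj_term s) (pair (emb t) h)" by blast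
  from bwd[OF assms h(2), rule_format, of s] H obtain t' h' where
    th: "pair (emb t) h = pair (emb t') h'" "\<forall>\<pi>. safe_tt R \<pi> \<longrightarrow> hat \<pi> = Some h' \<longrightarrow> rstep R (s, []) (t', [\<pi>])"
    by blast
  then have "t' = t" "h' = h" by (auto simp: pair_inj dest: emb_inj)
  then show "rstep R (s, []) (t, [\<pi>])" using th(2) H h(1) by blast
qed


end
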